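(* Let $n \geq 1$ and let $d_1, d_2, \ldots, d_n$ be positive integers. Then there exists a connected signed bipartite graph $G(U,V)$ whose signed degree set is $$S = \left\{ d_1,\ \sum_{i=1}^{2} d_i,\ \ldots,\ \sum_{i=1}^{n} d_i \right\}.$$
   Context: A signed bipartite graph $G(U,V)$ is a finite simple bipartite graph with bipartition $U, V$ (both nonempty, every edge joining a vertex of $U$ to a vertex of $V$) in which each edge is assigned a sign, positive or negative. The signed degree of a vertex $x$ is $\mathrm{sdeg}(x) = d^+(x) - d^-(x)$, where $d^+(x)$ (resp. $d^-(x)$) is the number of positive (resp. negative) edges incident with $x$. The signed degree set of $G(U,V)$ is the set of distinct signed degrees of its vertices. $G(U,V)$ is called connected if each vertex of $U$ is connected (by a path) to every vertex of $V$. *)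

theory Defs
  imports Main
begin

text \<open>A signed bipartite graph on parts U, V: the edge set E consists of pairs (u,v)
  with u in U and v in V (so the graph is simple: at most one edge per pair, no loops);
  pos e says whether edge e is positive (otherwise it is negative).\<close>

definition signed_bipartite_graph ::
  "'a set \<Rightarrow> 'a set \<Rightarrow> ('a \<times> 'a) set \<Rightarrow> (('a \<times> 'a) \<Rightarrow> bool) \<Rightarrow> bool" where
  "signed_bipartite_graph U V E pos \<longleftrightarrow>
     finite U \<and> finite V \<and> U \<noteq> {} \<and> V \<noteq> {} \<and> U \<inter> V = {} \<and> E \<subseteq> U \<times> V"

definition incident :: "('a \<times> 'a) set \<Rightarrow> 'a \<Rightarrow> ('a \<times> 'a) set" where
  "incident E x = {e \<in> E. fst e = x \<or> snd e = x}"

definition sdeg :: "('a \<times> 'a) set \<Rightarrow> (('a \<times> 'a) \<Rightarrow> bool) \<Rightarrow> 'a \<Rightarrow> int" where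
  "sdeg E pos x = int (card {e \<in> incident E x. pos e}) - int (card {e \<in> incident E x. \<not> pos e})"

definition signed_degree_set ::
  "'a set \<Rightarrow> 'a set \<Rightarrow> ('a \<times> 'a) set \<Rightarrow> (('a \<times> 'a) \<Rightarrow> bool) \<Rightarrow> int set" where
  "signed_degree_set U V E pos = sdeg E pos ` (U \<union> V)"

definition adjacent :: "('a \<times> 'a) set \<Rightarrow> 'a \<Rightarrow> 'a \<Rightarrow> bool" where
  "adjacent E x y \<longleftrightarrow> (x, y) \<in> E \<or> (y, x) \<in> E"

definition sb_connected :: "'a set \<Rightarrow> 'a set \<Rightarrow> ('a \<times> 'a) set \<Rightarrow> bool" where
  "sb_connected U V E \<longleftrightarrow> (\<forall>u\<in>U. \<forall>v\<in>V. (adjacent E)\<^sup>*\<^sup>* u v)"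

end

theory Submission
  imports Defs
begin

lemma ps_mono:
  fixes d :: "nat \<Rightarrow> int"
  assumes "\<And>i. 1 \<le> i \<Longrightarrow> i \<le> n \<Longrightarrow> d i > 0" "i \<le> j" "j \<le> n"
  shows "(\<Sum>k=1..i. d k) \<le> (\<Sum>k=1..j. d k)"
proof (rule sum_mono2)
  fix k assume "k \<in> {1..j} - {1..i}"
  then show "0 \<le> d k" using assms(1)[of k] assms(3) by auto
qed (use assms in auto)

lemma ps_strict:
  fixes d :: "nat \<Rightarrow> int"
  assumes "\<And>i. 1 \<le> i \<Longrightarrow> i \<le> n \<Longrightarrow> d i > 0" "i < j" "j \<le> n"
  shows "(\<Sum>k=1..i. d k) < (\<Sum>k=1..j. d k)"
proof -
  obtain j' where j: "j = Suc j'" using assms(2) by (cases j) auto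
  have "(\<Sum>k=1..i. d k) \<le> (\<Sum>k=1..j'. d k)"
    by (rule ps_mono[OF assms(1)]) (use assms j in auto)
  also have "\<dots> < (\<Sum>k=1..j'. d k) + d j" using assms(1)[of j] assms j by auto
  also have "\<dots> = (\<Sum>k=1..j. d k)" using j by simp
  finally show ?thesis .
qed

lemma nbhd:
  fixes d :: "nat \<Rightarrow> int" and s :: "nat \<Rightarrow> int"
  assumes sdef: "s = (\<lambda>k. \<Sum>i=1..k. d i)"
  assumes dpos: "\<And>i. 1 \<le> i \<Longrightarrow> i \<le> n \<Longrightarrow> d i > 0"
    and c: "1 \<le> c" "c \<le> n" "int a \<le> s c" "\<forall>j. 1 \<le> j \<longrightarrow> j < c \<longrightarrow> s j < int a"
  shows "{b \<in> {1..nat (s n)}. \<exists>j\<in>{1..n}. int a \<le> s j \<and> int b \<le> s (n+1-j)}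
         = {1..nat (s (n+1-c))}"
proof
  have mono: "\<And>i j. i \<le> j \<Longrightarrow> j \<le> n \<Longrightarrow> s i \<le> s j"
    using ps_mono[OF dpos] sdef by auto
  show "{b \<in> {1..nat (s n)}. \<exists>j\<in>{1..n}. int a \<le> s j \<and> int b \<le> s (n+1-j)}
         \<subseteq> {1..nat (s (n+1-c))}"
  proof
    fix b assume "b \<in> {b \<in> {1..nat (s n)}. \<exists>j\<in>{1..n}. int a \<le> s j \<and> int b \<le> s (n+1-j)}"
    then obtain j where b: "1 \<le> b" and j: "1 \<le> j" "j \<le> n" "int a \<le> s j" "int b \<le> s (n+1-j)"
      by auto
    have "c \<le> j" using c(4) j by (meson not_le linorder_not_less)
    then have "s (n+1-j) \<le> s (n+1-c)" using mono[of "n+1-j" "n+1-c"] c by auto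
    then show "b \<in> {1..nat (s (n+1-c))}" using b j by auto
  qed
  show "{1..nat (s (n+1-c))} \<subseteq>
        {b \<in> {1..nat (s n)}. \<exists>j\<in>{1..n}. int a \<le> s j \<and> int b \<le> s (n+1-j)}"
  proof
    fix b assume b: "b \<in> {1..nat (s (n+1-c))}"
    have "s (n+1-c) \<le> s n" using mono[of "n+1-c" n] c by auto
    moreover have "int b \<le> s (n+1-c)" using b by auto
    ultimately show "b \<in> {b \<in> {1..nat (s n)}. \<exists>j\<in>{1..n}. int a \<le> s j \<and> int b \<le> s (n+1-j)}"
      using b c by auto
  qed
qed

theorem theorem2p1:
  fixes n :: nat and d :: "nat \<Rightarrow> int"
  assumes "n \<ge> 1" and "\<And>i. 1 \<le> i \<Longrightarrow> i \<le> n \<Longrightarrow> d i > 0"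
  shows "\<exists>(U :: nat set) V E pos.
           signed_bipartite_graph U V E pos \<and> sb_connected U V E \<and>
           signed_degree_set U V E pos = {(\<Sum>i = 1..k. d i) | k. 1 \<le> k \<and> k \<le> n}"
proof -
  note dpos = assms(2)
  define s where "s = (\<lambda>k. \<Sum>i=1..k. d i)"
  have mono: "\<And>i j. i \<le> j \<Longrightarrow> j \<le> n \<Longrightarrow> s i \<le> s j"
    using ps_mono[OF dpos] s_def by auto
  have strict: "\<And>i j. i < j \<Longrightarrow> j \<le> n \<Longrightarrow> s i < s j"
    using ps_strict[OF dpos] s_def by auto
  have s1: "s 1 \<ge> 1" using dpos[of 1] assms(1) s_def by simp
  have s0: "s 0 = 0" using s_def by simp
  have spos: "\<And>k. 1 \<le> k \<Longrightarrow> k \<le> n \<Longrightarrow> s k \<ge> 1" using mono[of 1] s1 by force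
  define M where "M = nat (s n)"
  have M1: "M \<ge> 1" using spos[of n] assms(1) M_def by auto
  define R where "R = (\<lambda>a b. \<exists>j\<in>{1..n}. int a \<le> s j \<and> int b \<le> s (n+1-j))"
  have Rsym: "R a b = R b a" for a b
  proof -
    have "R a b \<Longrightarrow> R b a" for a b
    proof -
      assume "R a b"
      then obtain j where "j \<in> {1..n}" "int a \<le> s j" "int b \<le> s (n+1-j)" unfolding R_def by auto
      then show "R b a" unfolding R_def by (intro bexI[of _ "n+1-j"]) auto
    qed
    then show ?thesis by blast
  qed
  define f where "f = (\<lambda>a. int (card {b \<in> {1..M}. R a b}))"
  have fval: "f a \<in> {s k | k. 1 \<le> k \<and> k \<le> n}" if a: "a \<in> {1..M}" for a
  proof -
    have ex: "int a \<le> s n" using a M_def by auto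
    define c where "c = (LEAST j. int a \<le> s j)"
    have c1: "int a \<le> s c" unfolding c_def by (rule LeastI[where P="\<lambda>j. int a \<le> s j", OF ex])
    have cn: "c \<le> n" unfolding c_def by (rule Least_le[where P="\<lambda>j. int a \<le> s j", OF ex])
    have c0: "c \<ge> 1" using c1 s0 a by (cases c) auto
    have cl: "\<forall>j. 1 \<le> j \<longrightarrow> j < c \<longrightarrow> s j < int a"
      unfolding c_def using not_less_Least by force
    have "{b \<in> {1..M}. R a b} = {1..nat (s (n+1-c))}"
      unfolding M_def R_def by (rule nbhd[OF s_def dpos c0 cn c1 cl])
    moreover have "s (n+1-c) \<ge> 1" by (rule spos) (use c0 cn in auto)
    ultimately have "f a = s (n+1-c)" unfolding f_def by simp
    then show ?thesis using c0 cn by (intro CollectI exI[of _ "n+1-c"]) auto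
  qed
  have fsurj: "s k \<in> f ` {1..M}" if k: "1 \<le> k" "k \<le> n" for k
  proof -
    define c where "c = n+1-k"
    define a where "a = nat (s c)"
    have c0: "1 \<le> c" "c \<le> n" using k c_def by auto
    have ia: "int a = s c" using spos[OF c0] a_def by simp
    have c1: "int a \<le> s c" using ia by simp
    have cl: "\<forall>j. 1 \<le> j \<longrightarrow> j < c \<longrightarrow> s j < int a" using strict c0 ia by auto
    have aM: "a \<in> {1..M}" using ia spos[OF c0] mono[of c n] c0 M_def by auto
    have "{b \<in> {1..M}. R a b} = {1..nat (s (n+1-c))}"
      unfolding M_def R_def by (rule nbhd[OF s_def dpos c0(1) c0(2) c1 cl])
    moreover have nck: "n+1-c = k" using c_def k by auto
    moreover have "s k \<ge> 1" by (rule spos[OF k])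
    ultimately have "f a = s k" unfolding f_def by simp
    then show ?thesis using aM by force
  qed
  have frange: "f ` {1..M} = {s k | k. 1 \<le> k \<and> k \<le> n}"
    using fval fsurj by blast
  define U where "U = (\<lambda>a. 2*a) ` {1..M}"
  define V where "V = (\<lambda>b. 2*b+1) ` {1..M}"
  define E where "E = {(2*a, 2*b+1) | a b. a \<in> {1..M} \<and> b \<in> {1..M} \<and> R a b}"
  define pos where "pos = (\<lambda>e::nat\<times>nat. True)"
  have G: "signed_bipartite_graph U V E pos"
    unfolding signed_bipartite_graph_def U_def V_def E_def using M1 by auto presburger
  have degU: "sdeg E pos (2*a) = f a" if a: "a \<in> {1..M}" for a
  proof -
    have "incident E (2*a) = (\<lambda>b. (2*a, 2*b+1)) ` {b \<in> {1..M}. R a b}"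
      unfolding incident_def E_def using a by auto presburger+
    moreover have "inj_on (\<lambda>b. (2*a, 2*b+1)) {b \<in> {1..M}. R a b}" by (auto simp: inj_on_def)
    ultimately have "card (incident E (2*a)) = card {b \<in> {1..M}. R a b}"
      by (simp add: card_image)
    then show ?thesis unfolding sdeg_def pos_def f_def by simp
  qed
  have degV: "sdeg E pos (2*b+1) = f b" if b: "b \<in> {1..M}" for b
  proof -
    have "incident E (2*b+1) = (\<lambda>a. (2*a, 2*b+1)) ` {a \<in> {1..M}. R b a}"
      unfolding incident_def E_def using b Rsym by auto presburger+
    moreover have "inj_on (\<lambda>a. (2*a, 2*b+1)) {a \<in> {1..M}. R b a}" by (auto simp: inj_on_def)
    ultimately have "card (incident E (2*b+1)) = card {a \<in> {1..M}. R b a}"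
      by (simp add: card_image)
    then show ?thesis unfolding sdeg_def pos_def f_def by simp
  qed
  have DS: "signed_degree_set U V E pos = f ` {1..M}"
  proof -
    have "sdeg E pos ` U = f ` {1..M}" unfolding U_def image_image
      using degU by (intro image_cong) auto
    moreover have "sdeg E pos ` V = f ` {1..M}" unfolding V_def image_image
      using degV by (intro image_cong) auto
    ultimately show ?thesis unfolding signed_degree_set_def by (simp add: image_Un)
  qed
  have Ra1: "R a 1" if "a \<in> {1..M}" for a
    unfolding R_def using that assms(1) s1 M_def by (intro bexI[of _ n]) auto
  have R1b: "R 1 b" if "b \<in> {1..M}" for b
    unfolding R_def using that assms(1) s1 M_def by (intro bexI[of _ 1]) auto
  have conn: "sb_connected U V E"
    unfolding sb_connected_def
  proof (intro ballI)
    fix u v assume "u \<in> U" "v \<in> V"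
    then obtain a b where a: "a \<in> {1..M}" "u = 2*a" and b: "b \<in> {1..M}" "v = 2*b+1"
      unfolding U_def V_def by auto
    have e1: "adjacent E u 3" unfolding adjacent_def E_def using a Ra1[OF a(1)] M1
      by (intro disjI1 CollectI exI[of _ a] exI[of _ 1]) auto
    have e2: "adjacent E 3 2" unfolding adjacent_def E_def using Ra1[of 1] M1
      by (intro disjI2 CollectI exI[of _ 1] exI[of _ 1]) auto
    have e3: "adjacent E 2 v" unfolding adjacent_def E_def using b R1b[OF b(1)] M1
      by (intro disjI1 CollectI exI[of _ 1] exI[of _ b]) auto
    show "(adjacent E)\<^sup>*\<^sup>* u v"
      using e1 e2 e3 by (meson r_into_rtranclp rtranclp_trans)
  qed
  have eq: "{s k | k. 1 \<le> k \<and> k \<le> n} = {(\<Sum>i = 1..k. d i) | k. 1 \<le> k \<and> k \<le> n}"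
    unfolding s_def by simp
  have SD: "signed_degree_set U V E pos = {(\<Sum>i = 1..k. d i) | k. 1 \<le> k \<and> k \<le> n}"
    using DS frange eq by simp
  show ?thesis
    by (rule exI[of _ U], rule exI[of _ V], rule exI[of _ E], rule exI[of _ pos])
       (intro conjI G conn SD)
qed

end
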